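(* Let $A \subset \mathbb{Z}^d$ be a finite set whose convex hull $\Delta_A$ is a $d$-dimensional simplex with vertices $v_1, \ldots, v_{d+1}$. Let $\widetilde{v} = (v,1) \in \mathbb{Z}^{d+1}$ denote the lift of $v \in \mathbb{Z}^d$, and let $\mathcal{C}_A = \{\sum_{a \in A} n_a \widetilde{a} : n_a \in \mathbb{N}\}$. Call $(g,H) \in \mathcal{C}_A$ (with $g \in \mathbb{Z}^d$, $H \in \mathbb{N}$) a minimal element of $\mathcal{C}_A$ if $(g,H) - \widetilde{v}_i \notin \mathcal{C}_A$ for every $i = 1, \ldots, d+1$, and enumerate the minimal elements of $\mathcal{C}_A$ as $(g_1,H_1), (g_2,H_2), \ldots$. Then for every $h \in \mathbb{N}$, \[ hA = \bigcup_j \Big\{ g_j + \sum_{i=1}^{d+1} k_i v_i : k_i \in \mathbb{N} \text{ for all } i, \ \sum_{i=1}^{d+1} k_i = h - H_j \Big\}. \]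
   Context: $\mathbb{N} = \{0,1,2,\ldots\}$. For $h \in \mathbb{N}$, $hA = \{a_1 + \cdots + a_h : a_i \in A\}$, with $0A = \{0\}$. *)

theory Defs
  imports "HOL-Analysis.Analysis"
begin

text \<open>Integer points of Z^d are modelled as int ^ 'n (d = CARD('n)).\<close>

definition to_real :: "int ^ 'n \<Rightarrow> real ^ 'n" where
  "to_real a = (\<chi> i. real_of_int (a $ i))"

definition sumset :: "nat \<Rightarrow> (int ^ 'n) set \<Rightarrow> (int ^ 'n) set" where
  "sumset h A = {\<Sum>i<h. f i | f. \<forall>i<h. f i \<in> A}"

definition lift :: "int ^ 'n \<Rightarrow> (int ^ 'n) \<times> int" where
  "lift v = (v, 1)"

definition coneA :: "(int ^ 'n) set \<Rightarrow> ((int ^ 'n) \<times> int) set" where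
  "coneA A = {\<Sum>a\<in>A. (int (n a) *s fst (lift a), int (n a) * snd (lift a)) | n. True}"

definition minimal_elts :: "(int ^ 'n) set \<Rightarrow> (int ^ 'n) set \<Rightarrow> ((int ^ 'n) \<times> int) set" where
  "minimal_elts A V = {p \<in> coneA A. \<forall>v\<in>V. p - lift v \<notin> coneA A}"

definition is_simplex_hull :: "(int ^ 'n) set \<Rightarrow> (int ^ 'n) set \<Rightarrow> bool" where
  "is_simplex_hull A V \<longleftrightarrow> card V = CARD('n) + 1 \<and>
     \<not> affine_dependent (to_real ` V) \<and> inj_on to_real V \<and>
     convex hull (to_real ` A) = convex hull (to_real ` V)"

end

theory Submission
  imports Defs
begin

lemma cone_iff: "p \<in> coneA A \<longleftrightarrow> (\<exists>n. p = ((\<Sum>a\<in>A. int (n a) *s a), (\<Sum>a\<in>A. int (n a))))"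
  unfolding coneA_def lift_def by (simp add: sum_prod)

lemma sumset_0: "sumset 0 A = {0}"
  unfolding sumset_def by auto

lemma sumset_Suc: "sumset (Suc h) A = {x + a | x a. x \<in> sumset h A \<and> a \<in> A}"
proof (rule set_eqI, rule iffI)
  fix y assume "y \<in> sumset (Suc h) A"
  then obtain f where f: "\<forall>i<Suc h. f i \<in> A" "y = (\<Sum>i<Suc h. f i)" unfolding sumset_def by auto
  then have "(\<Sum>i<h. f i) \<in> sumset h A" unfolding sumset_def by auto
  moreover have "y = (\<Sum>i<h. f i) + f h" using f by simp
  moreover have "f h \<in> A" using f by simp
  ultimately show "y \<in> {x + a | x a. x \<in> sumset h A \<and> a \<in> A}" by blast
next
  fix y assume "y \<in> {x + a | x a. x \<in> sumset h A \<and> a \<in> A}"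
  then obtain x a where xa: "y = x + a" "x \<in> sumset h A" "a \<in> A" by auto
  then obtain f where f: "\<forall>i<h. f i \<in> A" "x = (\<Sum>i<h. f i)" unfolding sumset_def by auto
  define f' where "f' = f(h := a)"
  have "(\<Sum>i<h. f' i) = x" unfolding f'_def f by (intro sum.cong) auto
  then have e: "y = (\<Sum>i<Suc h. f' i)" using xa by (simp add: f'_def)
  have m: "\<forall>i<Suc h. f' i \<in> A" using f xa by (auto simp: f'_def less_Suc_eq)
  show "y \<in> sumset (Suc h) A" unfolding sumset_def
    by (rule CollectI, rule exI[of _ f'], rule conjI[OF e m])
qed

lemma sumset_rep:
  assumes "finite A"
  shows "x \<in> sumset h A \<Longrightarrow> \<exists>n. x = (\<Sum>a\<in>A. int (n a) *s a) \<and> (\<Sum>a\<in>A. n a) = h"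
proof (induction h arbitrary: x)
  case 0
  then show ?case by (intro exI[of _ "\<lambda>_. 0"]) (simp add: sumset_0)
next
  case (Suc h)
  then obtain y a where ya: "x = y + a" "y \<in> sumset h A" "a \<in> A" by (auto simp: sumset_Suc)
  then obtain n where n: "y = (\<Sum>a\<in>A. int (n a) *s a)" "(\<Sum>a\<in>A. n a) = h" using Suc.IH by blast
  define n' where "n' = (\<lambda>b. n b + (if b = a then 1 else 0::nat))"
  have e1: "int (n' b) *s b = int (n b) *s b + (if b = a then b else 0)" for b
    by (simp add: n'_def vec_eq_iff algebra_simps)
  have L1: "(\<Sum>b\<in>A. int (n' b) *s b) = y + a"
    unfolding e1 sum.distrib n using assms ya by (simp add: sum.delta')
  have L2: "(\<Sum>b\<in>A. n' b) = Suc h"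
    unfolding n'_def sum.distrib using assms ya n by (simp add: sum.delta')
  show ?case by (rule exI[of _ n'], rule conjI, simp only: L1 ya(1), rule L2)
qed

lemma rep_sumset:
  assumes "finite A"
  shows "\<forall>n. (\<Sum>a\<in>A. n a) = m \<longrightarrow> (\<Sum>a\<in>A. int (n a) *s a) \<in> sumset m A"
proof (induction m)
  case 0
  then show ?case using assms by (simp add: sumset_0)
next
  case (Suc m)
  show ?case
  proof (intro allI impI)
    fix n assume hn: "(\<Sum>a\<in>A. n a) = Suc m"
    have "\<not>(\<forall>a\<in>A. n a = 0)"
    proof
      assume "\<forall>a\<in>A. n a = 0"
      then have "sum n A = 0" by simp
      then show False using hn by simp
    qed
    then obtain a0 where a0: "a0 \<in> A" "n a0 > 0" by auto
    define n' where "n' = n(a0 := n a0 - 1)"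
    have s1: "(\<Sum>a\<in>A. n a) = n a0 + (\<Sum>a\<in>A-{a0}. n a)" by (rule sum.remove[OF assms a0(1)])
    have s2: "(\<Sum>a\<in>A. n' a) = n' a0 + (\<Sum>a\<in>A-{a0}. n' a)" by (rule sum.remove[OF assms a0(1)])
    have s3: "(\<Sum>a\<in>A-{a0}. n' a) = (\<Sum>a\<in>A-{a0}. n a)" by (intro sum.cong) (auto simp: n'_def)
    have "(\<Sum>a\<in>A. n' a) = m" using s1 s2 s3 hn a0 by (simp add: n'_def)
    then have "(\<Sum>a\<in>A. int (n' a) *s a) \<in> sumset m A" using Suc.IH by blast
    moreover have "(\<Sum>a\<in>A. int (n a) *s a) = (\<Sum>a\<in>A. int (n' a) *s a) + a0"
    proof -
      have t1: "(\<Sum>a\<in>A. int (n a) *s a) = int (n a0) *s a0 + (\<Sum>a\<in>A-{a0}. int (n a) *s a)"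
        by (rule sum.remove[OF assms a0(1)])
      have t2: "(\<Sum>a\<in>A. int (n' a) *s a) = int (n' a0) *s a0 + (\<Sum>a\<in>A-{a0}. int (n' a) *s a)"
        by (rule sum.remove[OF assms a0(1)])
      have t3: "(\<Sum>a\<in>A-{a0}. int (n' a) *s a) = (\<Sum>a\<in>A-{a0}. int (n a) *s a)"
        by (intro sum.cong) (auto simp: n'_def)
      have t4: "int (n a0) *s a0 = int (n' a0) *s a0 + a0"
        using a0 by (simp add: n'_def vec_eq_iff algebra_simps of_nat_diff)
      show ?thesis unfolding t1 t2 t3 t4 by (simp add: algebra_simps)
    qed
    ultimately show "(\<Sum>a\<in>A. int (n a) *s a) \<in> sumset (Suc m) A"
      using a0 by (auto simp: sumset_Suc)
  qed
qed

lemma V_sub_A: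
  assumes "is_simplex_hull A V"
  shows "V \<subseteq> A"
proof
  fix v assume v: "v \<in> V"
  have ai: "\<not> affine_dependent (to_real ` V)" and hull: "convex hull (to_real ` A) = convex hull (to_real ` V)"
    using assms unfolding is_simplex_hull_def by auto
  have "to_real v extreme_point_of (convex hull (to_real ` V))"
    using extreme_point_of_convex_hull_affine_independent[OF ai] v by auto
  then have "to_real v extreme_point_of (convex hull (to_real ` A))" using hull by simp
  then have "to_real v \<in> to_real ` A" by (rule extreme_point_of_convex_hull)
  then obtain a where "a \<in> A" "to_real a = to_real v" by auto
  then have "a = v" by (simp add: to_real_def vec_eq_iff)
  then show "v \<in> A" using \<open>a \<in> A\<close> by simp
qed


lemma update_sum:
  assumes "finite V" "v \<in> V"
  shows "(\<Sum>w\<in>V. int (k w + (if w = v then 1 else 0)) *s w) = (\<Sum>w\<in>V. int (k w) *s w) + v"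
    and "(\<Sum>w\<in>V. k w + (if w = v then 1 else 0::nat)) = (\<Sum>w\<in>V. k w) + 1"
proof -
  have e1: "int (k w + (if w = v then 1 else 0)) *s w = int (k w) *s w + (if w = v then w else 0)" for w
    by (simp add: vec_eq_iff algebra_simps)
  show "(\<Sum>w\<in>V. int (k w + (if w = v then 1 else 0)) *s w) = (\<Sum>w\<in>V. int (k w) *s w) + v"
    unfolding e1 sum.distrib using assms by (simp add: sum.delta')
  show "(\<Sum>w\<in>V. k w + (if w = v then 1 else 0::nat)) = (\<Sum>w\<in>V. k w) + 1"
    unfolding sum.distrib using assms by (simp add: sum.delta')
qed

theorem proposition4p1:
  fixes A V :: "(int ^ 'n) set" and h :: nat
  assumes "finite A"
    and "is_simplex_hull A V"
  shows "sumset h A =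
    (\<Union>(g, H)\<in>minimal_elts A V.
       {g + (\<Sum>v\<in>V. int (k v) *s v) | k :: int ^ 'n \<Rightarrow> nat.
          int (\<Sum>v\<in>V. k v) = int h - H})"
proof -
  have fA: "finite A" by fact
  have "card V = CARD('n) + 1" using assms(2) unfolding is_simplex_hull_def by auto
  then have fV: "finite V"
  proof (rule contrapos_pp)
    assume "infinite V"
    then show "card V \<noteq> CARD('n) + 1" by simp
  qed
  have VA: "V \<subseteq> A" using V_sub_A[OF assms(2)] .
  show ?thesis
  proof (rule set_eqI, rule iffI)
    fix x assume "x \<in> sumset h A"
    then obtain n0 where n0: "x = (\<Sum>a\<in>A. int (n0 a) *s a)" "(\<Sum>a\<in>A. n0 a) = h"
      using sumset_rep[OF fA] by blast
    define P where "P m \<longleftrightarrow> (\<exists>n k. x = (\<Sum>a\<in>A. int (n a) *s a) + (\<Sum>v\<in>V. int (k v) *s v)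
        \<and> h = (\<Sum>a\<in>A. n a) + (\<Sum>v\<in>V. k v) \<and> (\<Sum>a\<in>A. n a) = m)" for m
    have "P h" unfolding P_def using n0 by (intro exI[of _ n0] exI[of _ "\<lambda>_. 0"]) simp
    define m where "m = (LEAST m. P m)"
    have Pm: "P m" unfolding m_def by (rule LeastI) fact
    have least: "\<not> P m'" if "m' < m" for m' using that unfolding m_def by (rule not_less_Least)
    from Pm obtain n k where nk: "x = (\<Sum>a\<in>A. int (n a) *s a) + (\<Sum>v\<in>V. int (k v) *s v)"
        "h = (\<Sum>a\<in>A. n a) + (\<Sum>v\<in>V. k v)" "(\<Sum>a\<in>A. n a) = m"
      unfolding P_def by blast
    define g where "g = (\<Sum>a\<in>A. int (n a) *s a)"
    define H where "H = (\<Sum>a\<in>A. int (n a))"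
    have Hm: "H = int m" unfolding H_def nk(3)[symmetric] by (rule of_nat_sum[symmetric])
    have gc: "(g, H) \<in> coneA A" unfolding cone_iff g_def H_def by blast
    have mini: "(g, H) - lift v \<notin> coneA A" if v: "v \<in> V" for v
    proof
      assume "(g, H) - lift v \<in> coneA A"
      then obtain n'' where n'': "(g, H) - lift v = ((\<Sum>a\<in>A. int (n'' a) *s a), (\<Sum>a\<in>A. int (n'' a)))"
        unfolding cone_iff by blast
      have g'': "g = (\<Sum>a\<in>A. int (n'' a) *s a) + v" and H'': "H = (\<Sum>a\<in>A. int (n'' a)) + 1"
        using n'' by (auto simp: lift_def prod_eq_iff algebra_simps)
      have "int ((\<Sum>a\<in>A. n'' a) + 1) = int m" unfolding of_nat_add of_nat_sum using H'' Hm by simp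
      then have m'': "(\<Sum>a\<in>A. n'' a) + 1 = m" by (simp only: of_nat_eq_iff)
      define k' where "k' = (\<lambda>w. k w + (if w = v then 1 else 0::nat))"
      have "P (\<Sum>a\<in>A. n'' a)" unfolding P_def
      proof (rule exI[of _ n''], rule exI[of _ k'], intro conjI)
        show "x = (\<Sum>a\<in>A. int (n'' a) *s a) + (\<Sum>v\<in>V. int (k' v) *s v)"
          unfolding k'_def update_sum(1)[OF fV v] nk(1) g_def[symmetric] g'' by (simp add: algebra_simps)
        show "h = (\<Sum>a\<in>A. n'' a) + (\<Sum>v\<in>V. k' v)"
          unfolding k'_def update_sum(2)[OF fV v] nk(2) nk(3) m''[symmetric] by simp
      qed simp
      moreover have "(\<Sum>a\<in>A. n'' a) < m" using m'' by simp
      ultimately show False using least by auto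
    qed
    have gm: "(g, H) \<in> minimal_elts A V" by (simp add: minimal_elts_def gc mini)
    have "x \<in> {g + (\<Sum>v\<in>V. int (k v) *s v) | k :: int ^ 'n \<Rightarrow> nat. int (\<Sum>v\<in>V. k v) = int h - H}"
      unfolding mem_Collect_eq
    proof (rule exI[of _ k], rule conjI)
      show "x = g + (\<Sum>v\<in>V. int (k v) *s v)" unfolding g_def by (rule nk(1))
      show "int (\<Sum>v\<in>V. k v) = int h - H" unfolding Hm nk(2) nk(3) by simp
    qed
    then show "x \<in> (\<Union>(g, H)\<in>minimal_elts A V.
       {g + (\<Sum>v\<in>V. int (k v) *s v) | k :: int ^ 'n \<Rightarrow> nat. int (\<Sum>v\<in>V. k v) = int h - H})"
      using gm by (intro UN_I[of "(g, H)"]) simp_all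
  next
    fix x assume "x \<in> (\<Union>(g, H)\<in>minimal_elts A V.
       {g + (\<Sum>v\<in>V. int (k v) *s v) | k :: int ^ 'n \<Rightarrow> nat. int (\<Sum>v\<in>V. k v) = int h - H})"
    then obtain p where p: "p \<in> minimal_elts A V" and xp: "x \<in> (case p of (g, H) \<Rightarrow>
       {g + (\<Sum>v\<in>V. int (k v) *s v) | k :: int ^ 'n \<Rightarrow> nat. int (\<Sum>v\<in>V. k v) = int h - H})"
      by (rule UN_E)
    obtain g H where pgH: "p = (g, H)" by (cases p)
    have gH: "(g, H) \<in> minimal_elts A V" using p pgH by simp
    have "x \<in> {g + (\<Sum>v\<in>V. int (k v) *s v) | k :: int ^ 'n \<Rightarrow> nat. int (\<Sum>v\<in>V. k v) = int h - H}"
      using xp pgH by simp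
    then obtain k where x: "x = g + (\<Sum>v\<in>V. int (k v) *s v)"
      and hk: "int (\<Sum>v\<in>V. k v) = int h - H" unfolding mem_Collect_eq by (elim exE conjE)
    have "(g, H) \<in> coneA A" using gH by (simp add: minimal_elts_def)
    then obtain n where n: "g = (\<Sum>a\<in>A. int (n a) *s a)" "H = (\<Sum>a\<in>A. int (n a))"
      unfolding cone_iff by blast
    define n' where "n' = (\<lambda>a. n a + (if a \<in> V then k a else 0))"
    have e1: "int (n' a) *s a = int (n a) *s a + (if a \<in> V then int (k a) *s a else 0)" for a
      by (simp add: n'_def vec_eq_iff algebra_simps)
    have AV: "A \<inter> V = V" using VA by blast
    have "(\<Sum>a\<in>A. int (n' a) *s a) = x"
      unfolding e1 sum.distrib x n unfolding sum.inter_restrict[OF fA, symmetric] AV ..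
    moreover have "(\<Sum>a\<in>A. n' a) = h"
    proof -
      have "(\<Sum>a\<in>A. n' a) = (\<Sum>a\<in>A. n a) + (\<Sum>v\<in>V. k v)"
        unfolding n'_def sum.distrib unfolding sum.inter_restrict[OF fA, symmetric] AV ..
      then have "int (\<Sum>a\<in>A. n' a) = H + int (\<Sum>v\<in>V. k v)" using n(2) by simp
      then have "int (\<Sum>a\<in>A. n' a) = int h" using hk by linarith
      then show ?thesis by (simp only: of_nat_eq_iff)
    qed
    ultimately show "x \<in> sumset h A" using rep_sumset[OF fA, rule_format, of n' h] by simp
  qed
qed

end
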